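(* Let $H\subset\mathbb{R}$ be a non-trivial rank one subgroup. The semiring $\mathcal R_H$ of germs at $\lambda=1$ of $\mathbb{R}_{\max}$-valued, piecewise affine, continuous convex functions $f(\lambda)$ with slopes in $H$ (with operations pointwise max and pointwise $+$) is multiplicatively cancellative, and its semifield of fractions $\mathrm{Frac}\,\mathcal R_H$ is (isomorphic to) the semifield of germs at $\lambda=1$ of $\mathbb{R}_{\max}$-valued, piecewise affine, continuous functions $f(\lambda)$ with slopes in $H$, endowed with the operations of pointwise max and pointwise addition of germs.
   Context: $\mathbb{R}_{\max}=\mathbb{R}\cup\{-\infty\}$ with "addition" $\max$ and "multiplication" $+$. A rank one subgroup of $\mathbb{R}$ is one isomorphic to a non-zero subgroup of $\mathbb{Q}$. The germ of the constant function $-\infty$ is the zero element; multiplicatively cancellative means $f+h=g+h$ with $h\neq-\infty$ implies $f=g$. *)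

theory Defs
  imports "HOL-Analysis.Analysis" "HOL-Library.Extended_Real"
begin

text \<open>R_max-valued functions are modelled as functions real \<Rightarrow> ereal that never
  take the value +\<infinity> (guaranteed by the membership predicates below);
  max is the "addition", + the "multiplication", \<lambda>_. -\<infinity> is the zero.\<close>

definition add_subgroup :: "real set \<Rightarrow> bool" where
  "add_subgroup H \<longleftrightarrow> 0 \<in> H \<and> (\<forall>x\<in>H. \<forall>y\<in>H. x + y \<in> H) \<and> (\<forall>x\<in>H. - x \<in> H)"

definition rank_one_subgroup :: "real set \<Rightarrow> bool" where
  "rank_one_subgroup H \<longleftrightarrow> add_subgroup H \<and> H \<noteq> {0} \<and>
     (\<exists>\<psi> :: real \<Rightarrow> rat. inj_on \<psi> H \<and> (\<forall>x\<in>H. \<forall>y\<in>H. \<psi> (x + y) = \<psi> x + \<psi> y))"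

definition pw_affine_slopes_on :: "real set \<Rightarrow> real \<Rightarrow> real \<Rightarrow> (real \<Rightarrow> real) \<Rightarrow> bool" where
  "pw_affine_slopes_on H a b g \<longleftrightarrow>
     (\<exists>S. finite S \<and>
        (\<forall>x y. a \<le> x \<and> x < y \<and> y \<le> b \<and> {x<..<y} \<inter> S = {} \<longrightarrow>
           (\<exists>s\<in>H. \<exists>c. \<forall>t\<in>{x..y}. g t = s * t + c)))"

text \<open>Representatives of germs at 1 of R_max-valued, piecewise affine, continuous functions
  with slopes in H (by continuity such a function is, near 1, either identically -\<infinity>
  or real valued).\<close>
definition PL_fun :: "real set \<Rightarrow> (real \<Rightarrow> ereal) \<Rightarrow> bool" where
  "PL_fun H f \<longleftrightarrow> (\<exists>\<epsilon>>0.
      (\<forall>t\<in>{1-\<epsilon>..1+\<epsilon>}. f t = -\<infinity>) \<or>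
      (\<exists>g. pw_affine_slopes_on H (1-\<epsilon>) (1+\<epsilon>) g \<and> continuous_on {1-\<epsilon>..1+\<epsilon>} g \<and>
           (\<forall>t\<in>{1-\<epsilon>..1+\<epsilon>}. f t = ereal (g t))))"

definition PL_convex_fun :: "real set \<Rightarrow> (real \<Rightarrow> ereal) \<Rightarrow> bool" where
  "PL_convex_fun H f \<longleftrightarrow> (\<exists>\<epsilon>>0.
      (\<forall>t\<in>{1-\<epsilon>..1+\<epsilon>}. f t = -\<infinity>) \<or>
      (\<exists>g. pw_affine_slopes_on H (1-\<epsilon>) (1+\<epsilon>) g \<and> continuous_on {1-\<epsilon>..1+\<epsilon>} g \<and>
           convex_on {1-\<epsilon>..1+\<epsilon>} g \<and>
           (\<forall>t\<in>{1-\<epsilon>..1+\<epsilon>}. f t = ereal (g t))))"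

definition germ_eq :: "(real \<Rightarrow> ereal) \<Rightarrow> (real \<Rightarrow> ereal) \<Rightarrow> bool" where
  "germ_eq f g \<longleftrightarrow> eventually (\<lambda>t. f t = g t) (nhds 1)"

definition germ_add :: "(real \<Rightarrow> ereal) \<Rightarrow> (real \<Rightarrow> ereal) \<Rightarrow> real \<Rightarrow> ereal" where
  "germ_add f g = (\<lambda>t. max (f t) (g t))"

definition germ_mult :: "(real \<Rightarrow> ereal) \<Rightarrow> (real \<Rightarrow> ereal) \<Rightarrow> real \<Rightarrow> ereal" where
  "germ_mult f g = (\<lambda>t. f t + g t)"

definition germ_zero :: "real \<Rightarrow> ereal" where
  "germ_zero = (\<lambda>_. -\<infinity>)"

definition mult_cancellative :: "((real \<Rightarrow> ereal) \<Rightarrow> bool) \<Rightarrow> bool" where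
  "mult_cancellative A \<longleftrightarrow>
     (\<forall>f g h. A f \<longrightarrow> A g \<longrightarrow> A h \<longrightarrow> \<not> germ_eq h germ_zero \<longrightarrow>
        germ_eq (germ_mult f h) (germ_mult g h) \<longrightarrow> germ_eq f g)"

definition frac_carrier :: "((real \<Rightarrow> ereal) \<Rightarrow> bool) \<Rightarrow> ((real \<Rightarrow> ereal) \<times> (real \<Rightarrow> ereal)) set" where
  "frac_carrier A = {(a, b). A a \<and> A b \<and> \<not> germ_eq b germ_zero}"

definition frac_eq :: "((real \<Rightarrow> ereal) \<times> (real \<Rightarrow> ereal)) \<Rightarrow> ((real \<Rightarrow> ereal) \<times> (real \<Rightarrow> ereal)) \<Rightarrow> bool" where
  "frac_eq p q \<longleftrightarrow> germ_eq (germ_mult (fst p) (snd q)) (germ_mult (fst q) (snd p))"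

definition frac_add :: "((real \<Rightarrow> ereal) \<times> (real \<Rightarrow> ereal)) \<Rightarrow> ((real \<Rightarrow> ereal) \<times> (real \<Rightarrow> ereal)) \<Rightarrow> ((real \<Rightarrow> ereal) \<times> (real \<Rightarrow> ereal))" where
  "frac_add p q = (germ_add (germ_mult (fst p) (snd q)) (germ_mult (fst q) (snd p)),
                   germ_mult (snd p) (snd q))"

definition frac_mult :: "((real \<Rightarrow> ereal) \<times> (real \<Rightarrow> ereal)) \<Rightarrow> ((real \<Rightarrow> ereal) \<times> (real \<Rightarrow> ereal)) \<Rightarrow> ((real \<Rightarrow> ereal) \<times> (real \<Rightarrow> ereal))" where
  "frac_mult p q = (germ_mult (fst p) (fst q), germ_mult (snd p) (snd q))"

definition frac_iso :: "((real \<Rightarrow> ereal) \<Rightarrow> bool) \<Rightarrow> ((real \<Rightarrow> ereal) \<Rightarrow> bool)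
    \<Rightarrow> ((real \<Rightarrow> ereal) \<times> (real \<Rightarrow> ereal) \<Rightarrow> (real \<Rightarrow> ereal)) \<Rightarrow> bool" where
  "frac_iso A B \<phi> \<longleftrightarrow>
     (\<forall>p\<in>frac_carrier A. B (\<phi> p)) \<and>
     (\<forall>p\<in>frac_carrier A. \<forall>q\<in>frac_carrier A. germ_eq (\<phi> p) (\<phi> q) \<longleftrightarrow> frac_eq p q) \<and>
     (\<forall>f. B f \<longrightarrow> (\<exists>p\<in>frac_carrier A. germ_eq (\<phi> p) f)) \<and>
     (\<forall>p\<in>frac_carrier A. \<forall>q\<in>frac_carrier A.
        germ_eq (\<phi> (frac_add p q)) (germ_add (\<phi> p) (\<phi> q)) \<and>
        germ_eq (\<phi> (frac_mult p q)) (germ_mult (\<phi> p) (\<phi> q)))"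

end

theory Submission
  imports Defs
begin

lemma ev_int:
  assumes "(e::real) > 0" "\<forall>t\<in>{1-e..1+e}. P t"
  shows "eventually P (nhds (1::real))"
  unfolding eventually_nhds_metric
  using assms by (intro exI[of _ e]) (auto simp: dist_real_def abs_if split: if_splits)

lemma convex_max_aff:
  "convex_on S (\<lambda>t::real. max (a + s1 * (t - 1)) (b + s2 * (t - 1)))" if "convex S"
proof (rule convex_onI[OF _ that])
  fix u x y :: real assume u: "0 < u" "u < 1"
  let ?R = "(1 - u) * max (a + s1 * (x - 1)) (b + s2 * (x - 1)) + u * max (a + s1 * (y - 1)) (b + s2 * (y - 1))"
  have 1: "a + s1 * ((1 - u) * x + u * y - 1) = (1-u)*(a + s1*(x-1)) + u*(a + s1*(y-1))" by (simp add: algebra_simps)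
  have 2: "b + s2 * ((1 - u) * x + u * y - 1) = (1-u)*(b + s2*(x-1)) + u*(b + s2*(y-1))" by (simp add: algebra_simps)
  have "(1-u)*(a + s1*(x-1)) \<le> (1-u) * max (a + s1*(x-1)) (b + s2*(x-1))" using u by (intro mult_left_mono) auto
  moreover have "u*(a + s1*(y-1)) \<le> u * max (a + s1*(y-1)) (b + s2*(y-1))" using u by (intro mult_left_mono) auto
  ultimately have A: "a + s1 * ((1 - u) * x + u * y - 1) \<le> ?R" unfolding 1 by (rule add_mono)
  have "(1-u)*(b + s2*(x-1)) \<le> (1-u) * max (a + s1*(x-1)) (b + s2*(x-1))" using u by (intro mult_left_mono) auto
  moreover have "u*(b + s2*(y-1)) \<le> u * max (a + s1*(y-1)) (b + s2*(y-1))" using u by (intro mult_left_mono) auto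
  ultimately have B: "b + s2 * ((1 - u) * x + u * y - 1) \<le> ?R" unfolding 2 by (rule add_mono)
  have "max (a + s1 * ((1 - u) * x + u * y - 1)) (b + s2 * ((1 - u) * x + u * y - 1)) \<le> ?R"
    using A B by (rule max.boundedI)
  then show "max (a + s1 * ((1 - u) *\<^sub>R x + u *\<^sub>R y - 1)) (b + s2 * ((1 - u) *\<^sub>R x + u *\<^sub>R y - 1)) \<le> ?R"
    by simp
qed

lemma kink_le: "(s1::real) \<le> s2 \<Longrightarrow> t \<le> 1 \<Longrightarrow> max (c + s1 * (t - 1)) (c + s2 * (t - 1)) = c + s1 * (t - 1)"
proof -
  assume "s1 \<le> s2" "t \<le> 1"
  then have "s2 * (t - 1) \<le> s1 * (t - 1)" by (intro mult_right_mono_neg) auto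
  then show ?thesis by (simp add: max_def)
qed

lemma kink_ge: "(s1::real) \<le> s2 \<Longrightarrow> 1 \<le> t \<Longrightarrow> max (c + s1 * (t - 1)) (c + s2 * (t - 1)) = c + s2 * (t - 1)"
proof -
  assume "s1 \<le> s2" "1 \<le> t"
  then have "s1 * (t - 1) \<le> s2 * (t - 1)" by (intro mult_right_mono) auto
  then show ?thesis by (simp add: max_def)
qed

lemma pw_mono:
  "pw_affine_slopes_on H a b g \<Longrightarrow> a \<le> a' \<Longrightarrow> b' \<le> b \<Longrightarrow> pw_affine_slopes_on H a' b' g"
  unfolding pw_affine_slopes_on_def by (meson order_trans)

lemma pw_diff:
  assumes H: "add_subgroup H" and "pw_affine_slopes_on H a b g1" "pw_affine_slopes_on H a b g2"
  shows "pw_affine_slopes_on H a b (\<lambda>t. g1 t - g2 t)"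
proof -
  obtain S1 where S1: "finite S1" "\<forall>x y. a \<le> x \<and> x < y \<and> y \<le> b \<and> {x<..<y} \<inter> S1 = {} \<longrightarrow>
           (\<exists>s\<in>H. \<exists>c. \<forall>t\<in>{x..y}. g1 t = s * t + c)" using assms(2) unfolding pw_affine_slopes_on_def by blast
  obtain S2 where S2: "finite S2" "\<forall>x y. a \<le> x \<and> x < y \<and> y \<le> b \<and> {x<..<y} \<inter> S2 = {} \<longrightarrow>
           (\<exists>s\<in>H. \<exists>c. \<forall>t\<in>{x..y}. g2 t = s * t + c)" using assms(3) unfolding pw_affine_slopes_on_def by blast
  show ?thesis unfolding pw_affine_slopes_on_def
  proof (intro exI[of _ "S1 \<union> S2"] conjI allI impI)
    show "finite (S1 \<union> S2)" using S1 S2 by auto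
    fix x y assume xy: "a \<le> x \<and> x < y \<and> y \<le> b \<and> {x<..<y} \<inter> (S1 \<union> S2) = {}"
    then obtain s1 c1 where s1: "s1 \<in> H" "\<forall>t\<in>{x..y}. g1 t = s1 * t + c1" using S1 by blast
    obtain s2 c2 where s2: "s2 \<in> H" "\<forall>t\<in>{x..y}. g2 t = s2 * t + c2" using S2 xy by blast
    have "s1 + - s2 \<in> H" using H s1 s2 unfolding add_subgroup_def by blast
    moreover have "\<forall>t\<in>{x..y}. g1 t - g2 t = (s1 + - s2) * t + (c1 - c2)" using s1 s2 by (simp add: algebra_simps)
    ultimately show "\<exists>s\<in>H. \<exists>c. \<forall>t\<in>{x..y}. g1 t - g2 t = s * t + c" by blast
  qed
qed

lemma pw_aff:
  assumes "s \<in> H" shows "pw_affine_slopes_on H a b (\<lambda>t. c + s * (t - 1))"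
  unfolding pw_affine_slopes_on_def
  by (rule exI[of _ "{}"]) (use assms in \<open>auto intro!: bexI[of _ s] exI[of _ "c - s"] simp: algebra_simps\<close>)

lemma pw_kink:
  assumes "s1 \<in> H" "s2 \<in> H" "s1 \<le> s2"
  shows "pw_affine_slopes_on H a b (\<lambda>t. max (c + s1 * (t - 1)) (c + s2 * (t - 1)))"
  unfolding pw_affine_slopes_on_def
proof (intro exI[of _ "{1}"] conjI allI impI)
  fix x y :: real assume xy: "a \<le> x \<and> x < y \<and> y \<le> b \<and> {x<..<y} \<inter> {1} = {}"
  then have "y \<le> 1 \<or> 1 \<le> x" by auto
  then show "\<exists>s\<in>H. \<exists>c'. \<forall>t\<in>{x..y}. max (c + s1 * (t - 1)) (c + s2 * (t - 1)) = s * t + c'"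
  proof
    assume "y \<le> 1"
    then have "\<forall>t\<in>{x..y}. max (c + s1 * (t - 1)) (c + s2 * (t - 1)) = s1 * t + (c - s1)"
      using kink_le[OF assms(3)] by (auto simp: algebra_simps)
    then show ?thesis using assms by blast
  next
    assume "1 \<le> x"
    then have "\<forall>t\<in>{x..y}. max (c + s1 * (t - 1)) (c + s2 * (t - 1)) = s2 * t + (c - s2)"
      using kink_ge[OF assms(3)] by (auto simp: algebra_simps)
    then show ?thesis using assms by blast
  qed
qed simp

lemma conv_fin:
  assumes "PL_convex_fun H f" "\<not> germ_eq f germ_zero"
  shows "\<exists>e>0. \<exists>g. pw_affine_slopes_on H (1-e) (1+e) g \<and> continuous_on {1-e..1+e} g \<and>
           (\<forall>t\<in>{1-e..1+e}. f t = ereal (g t))"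
proof -
  obtain e where e: "e > 0" and d: "(\<forall>t\<in>{1-e..1+e}. f t = -\<infinity>) \<or>
      (\<exists>g. pw_affine_slopes_on H (1-e) (1+e) g \<and> continuous_on {1-e..1+e} g \<and>
           convex_on {1-e..1+e} g \<and> (\<forall>t\<in>{1-e..1+e}. f t = ereal (g t)))"
    using assms(1) unfolding PL_convex_fun_def by blast
  have "\<not> (\<forall>t\<in>{1-e..1+e}. f t = -\<infinity>)"
  proof
    assume "\<forall>t\<in>{1-e..1+e}. f t = -\<infinity>"
    then have "germ_eq f germ_zero" unfolding germ_eq_def germ_zero_def using ev_int[OF e] by blast
    then show False using assms(2) by blast
  qed
  then show ?thesis using d e by blast
qed

lemma conv_notinf:
  assumes "PL_convex_fun H f" shows "eventually (\<lambda>t. f t \<noteq> \<infinity>) (nhds 1)"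
proof -
  obtain e where e: "e > 0" and d: "(\<forall>t\<in>{1-e..1+e}. f t = -\<infinity>) \<or>
      (\<exists>g. pw_affine_slopes_on H (1-e) (1+e) g \<and> continuous_on {1-e..1+e} g \<and>
           convex_on {1-e..1+e} g \<and> (\<forall>t\<in>{1-e..1+e}. f t = ereal (g t)))"
    using assms(1) unfolding PL_convex_fun_def by blast
  have "\<forall>t\<in>{1-e..1+e}. f t \<noteq> \<infinity>" using d by auto
  then show ?thesis using ev_int[OF e] by blast
qed

lemma conv_fin_ev:
  assumes "PL_convex_fun H f" "\<not> germ_eq f germ_zero"
  shows "eventually (\<lambda>t. f t \<noteq> \<infinity> \<and> f t \<noteq> -\<infinity>) (nhds 1)"
proof -
  obtain e g where e: "e > 0" "\<forall>t\<in>{1-e..1+e}. f t = ereal (g t)" using conv_fin[OF assms] by blast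
  have "\<forall>t\<in>{1-e..1+e}. f t \<noteq> \<infinity> \<and> f t \<noteq> -\<infinity>" using e by auto
  then show ?thesis using ev_int[OF e(1)] by blast
qed

lemma e1: "b \<noteq> \<infinity> \<Longrightarrow> b \<noteq> -\<infinity> \<Longrightarrow> d \<noteq> \<infinity> \<Longrightarrow> d \<noteq> -\<infinity> \<Longrightarrow>
   ((a::ereal) - b = c - d) = (a + d = c + b)"
  by (cases a; cases b; cases c; cases d) (auto simp: algebra_simps)

lemma e2: "b \<noteq> \<infinity> \<Longrightarrow> b \<noteq> -\<infinity> \<Longrightarrow> d \<noteq> \<infinity> \<Longrightarrow> d \<noteq> -\<infinity> \<Longrightarrow>
   max (a + d) (c + b) - (b + d) = max ((a::ereal) - b) (c - d)"
  by (cases a; cases b; cases c; cases d) (auto simp: max_def algebra_simps)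

lemma e3: "b \<noteq> \<infinity> \<Longrightarrow> b \<noteq> -\<infinity> \<Longrightarrow> d \<noteq> \<infinity> \<Longrightarrow> d \<noteq> -\<infinity> \<Longrightarrow>
   a \<noteq> \<infinity> \<Longrightarrow> c \<noteq> \<infinity> \<Longrightarrow> ((a::ereal) + c) - (b + d) = (a - b) + (c - d)"
  by (cases a; cases b; cases c; cases d) (auto simp: algebra_simps)

lemma e4: "h \<noteq> \<infinity> \<Longrightarrow> h \<noteq> -\<infinity> \<Longrightarrow> (a::ereal) + h = c + h \<Longrightarrow> a = c"
  by (cases a; cases c; cases h) auto

lemma phi_PL:
  assumes H: "add_subgroup H" and a: "PL_convex_fun H a" and b: "PL_convex_fun H b" "\<not> germ_eq b germ_zero"
  shows "PL_fun H (\<lambda>t. a t - b t)"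
proof -
  obtain eb gb where eb: "eb > 0" "pw_affine_slopes_on H (1-eb) (1+eb) gb" "continuous_on {1-eb..1+eb} gb"
     "\<forall>t\<in>{1-eb..1+eb}. b t = ereal (gb t)" using conv_fin[OF b] by blast
  obtain ea where ea: "ea > 0" and d: "(\<forall>t\<in>{1-ea..1+ea}. a t = -\<infinity>) \<or>
      (\<exists>g. pw_affine_slopes_on H (1-ea) (1+ea) g \<and> continuous_on {1-ea..1+ea} g \<and>
           convex_on {1-ea..1+ea} g \<and> (\<forall>t\<in>{1-ea..1+ea}. a t = ereal (g t)))"
    using a unfolding PL_convex_fun_def by blast
  define e where "e = min ea eb"
  have e: "e > 0" "e \<le> ea" "e \<le> eb" using ea eb unfolding e_def by auto
  have sub: "{1-e..1+e} \<subseteq> {1-ea..1+ea}" "{1-e..1+e} \<subseteq> {1-eb..1+eb}" using e by auto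
  show ?thesis using d
  proof
    assume "\<forall>t\<in>{1-ea..1+ea}. a t = -\<infinity>"
    then have "\<forall>t\<in>{1-e..1+e}. a t - b t = -\<infinity>" using sub eb(4) by fastforce
    then show ?thesis unfolding PL_fun_def using e(1) by blast
  next
    assume "\<exists>g. pw_affine_slopes_on H (1-ea) (1+ea) g \<and> continuous_on {1-ea..1+ea} g \<and>
           convex_on {1-ea..1+ea} g \<and> (\<forall>t\<in>{1-ea..1+ea}. a t = ereal (g t))"
    then obtain ga where ga: "pw_affine_slopes_on H (1-ea) (1+ea) ga" "continuous_on {1-ea..1+ea} ga"
      "\<forall>t\<in>{1-ea..1+ea}. a t = ereal (ga t)" by blast
    have "pw_affine_slopes_on H (1-e) (1+e) (\<lambda>t. ga t - gb t)"
      using pw_diff[OF H pw_mono[OF ga(1)] pw_mono[OF eb(2)]] e by auto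
    moreover have "continuous_on {1-e..1+e} (\<lambda>t. ga t - gb t)"
      using continuous_on_subset[OF ga(2) sub(1)] continuous_on_subset[OF eb(3) sub(2)]
      by (intro continuous_on_diff)
    moreover have "\<forall>t\<in>{1-e..1+e}. a t - b t = ereal (ga t - gb t)" using ga(3) eb(4) sub by auto
    ultimately show ?thesis unfolding PL_fun_def using e(1) by blast
  qed
qed

lemma zero_conv: "0 \<in> H \<Longrightarrow> PL_convex_fun H (\<lambda>_. 0)"
  unfolding PL_convex_fun_def pw_affine_slopes_on_def
  by (intro exI[of _ 1]) (auto simp: zero_ereal_def convex_on_const intro!: exI[of _ "\<lambda>_. 0"] exI[of _ "{}"] bexI[of _ 0])

lemma aff_conv: "s \<in> H \<Longrightarrow> PL_convex_fun H (\<lambda>t. ereal (c + s * (t - 1)))"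
proof -
  assume s: "s \<in> H"
  have "convex_on {1-1..1+1} (\<lambda>t::real. max (c + s * (t - 1)) (c + s * (t - 1)))" by (rule convex_max_aff) auto
  then have "convex_on {1-1..1+1} (\<lambda>t::real. c + s * (t - 1))" by simp
  moreover have "pw_affine_slopes_on H (1-1) (1+1) (\<lambda>t. c + s * (t - 1))" using pw_aff[OF s] .
  moreover have "continuous_on {1-1..1+1} (\<lambda>t::real. c + s * (t - 1))" by (intro continuous_intros)
  ultimately show ?thesis unfolding PL_convex_fun_def
    by (intro exI[of _ 1]) (auto intro!: exI[of _ "\<lambda>t. c + s * (t - 1)"])
qed

lemma kink_conv: "s1 \<in> H \<Longrightarrow> s2 \<in> H \<Longrightarrow> s1 \<le> s2 \<Longrightarrow>
  PL_convex_fun H (\<lambda>t. ereal (max (c + s1 * (t - 1)) (c + s2 * (t - 1))))"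
proof -
  assume s: "s1 \<in> H" "s2 \<in> H" "s1 \<le> s2"
  have "convex_on {1-1..1+1} (\<lambda>t::real. max (c + s1 * (t - 1)) (c + s2 * (t - 1)))" by (rule convex_max_aff) auto
  moreover have "pw_affine_slopes_on H (1-1) (1+1) (\<lambda>t. max (c + s1 * (t - 1)) (c + s2 * (t - 1)))"
    using pw_kink[OF s] .
  moreover have "continuous_on {1-1..1+1} (\<lambda>t::real. max (c + s1 * (t - 1)) (c + s2 * (t - 1)))"
    by (intro continuous_intros)
  ultimately show ?thesis unfolding PL_convex_fun_def
    by (intro exI[of _ 1]) (auto intro!: exI[of _ "\<lambda>t. max (c + s1 * (t - 1)) (c + s2 * (t - 1))"])
qed

lemma real_not_zero: "\<not> germ_eq (\<lambda>t. ereal (g t)) germ_zero"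
  unfolding germ_eq_def germ_zero_def by simp

lemma surj_part:
  assumes H: "add_subgroup H" and f: "PL_fun H f"
  shows "\<exists>p\<in>frac_carrier (PL_convex_fun H). germ_eq (\<lambda>t. fst p t - snd p t) f"
proof -
  have H0: "0 \<in> H" using H unfolding add_subgroup_def by blast
  obtain e where e: "e > 0" and d: "(\<forall>t\<in>{1-e..1+e}. f t = -\<infinity>) \<or>
      (\<exists>g. pw_affine_slopes_on H (1-e) (1+e) g \<and> continuous_on {1-e..1+e} g \<and>
           (\<forall>t\<in>{1-e..1+e}. f t = ereal (g t)))"
    using f unfolding PL_fun_def by blast
  show ?thesis using d
  proof
    assume m: "\<forall>t\<in>{1-e..1+e}. f t = -\<infinity>"
    have "PL_convex_fun H (\<lambda>_. -\<infinity>)" unfolding PL_convex_fun_def by (intro exI[of _ 1]) auto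
    moreover have "\<not> germ_eq (\<lambda>_. 0) germ_zero" using real_not_zero[of "\<lambda>_. 0"] by (simp add: zero_ereal_def)
    ultimately have "((\<lambda>_. -\<infinity>), (\<lambda>_. 0)) \<in> frac_carrier (PL_convex_fun H)"
      unfolding frac_carrier_def using zero_conv[OF H0] by auto
    moreover have "germ_eq (\<lambda>t. fst ((\<lambda>_. -\<infinity>), (\<lambda>_. 0::ereal)) t - snd ((\<lambda>_. -\<infinity>), (\<lambda>_. 0::ereal)) t) f"
      unfolding germ_eq_def using m by (intro ev_int[OF e]) auto
    ultimately show ?thesis by blast
  next
    assume "\<exists>g. pw_affine_slopes_on H (1-e) (1+e) g \<and> continuous_on {1-e..1+e} g \<and>
           (\<forall>t\<in>{1-e..1+e}. f t = ereal (g t))"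
    then obtain g where pw: "pw_affine_slopes_on H (1-e) (1+e) g" and fg: "\<forall>t\<in>{1-e..1+e}. f t = ereal (g t)"
      by blast
    obtain S where S: "finite S" "\<forall>x y. 1-e \<le> x \<and> x < y \<and> y \<le> 1+e \<and> {x<..<y} \<inter> S = {} \<longrightarrow>
           (\<exists>s\<in>H. \<exists>c. \<forall>t\<in>{x..y}. g t = s * t + c)" using pw unfolding pw_affine_slopes_on_def by blast
    obtain \<delta> where \<delta>: "\<delta> > 0" "\<forall>x\<in>S. x \<noteq> 1 \<longrightarrow> \<delta> \<le> dist 1 x" using finite_set_avoid[OF S(1), of 1] by blast
    define r where "r = min e \<delta>"
    have r: "r > 0" "r \<le> e" "r \<le> \<delta>" using e \<delta> unfolding r_def by auto
    have "{1-r<..<1} \<inter> S = {}"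
    proof (rule ccontr)
      assume "{1-r<..<1} \<inter> S \<noteq> {}"
      then obtain x where "x \<in> S" "1 - r < x" "x < 1" by auto
      then show False using \<delta>(2) r by (auto simp: dist_real_def)
    qed
    then obtain s1 c1 where s1: "s1 \<in> H" "\<forall>t\<in>{1-r..1}. g t = s1 * t + c1" using S(2)[rule_format, of "1-r" 1] r by auto
    have "{1<..<1+r} \<inter> S = {}"
    proof (rule ccontr)
      assume "{1<..<1+r} \<inter> S \<noteq> {}"
      then obtain x where "x \<in> S" "1 < x" "x < 1 + r" by auto
      then show False using \<delta>(2) r by (auto simp: dist_real_def)
    qed
    then obtain s2 c2 where s2: "s2 \<in> H" "\<forall>t\<in>{1..1+r}. g t = s2 * t + c2" using S(2)[rule_format, of 1 "1+r"] r by auto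
    define c where "c = g 1"
    have L: "\<forall>t\<in>{1-r..1}. g t = c + s1 * (t - 1)" using s1(2) r unfolding c_def by (auto simp: algebra_simps)
    have R: "\<forall>t\<in>{1..1+r}. g t = c + s2 * (t - 1)" using s2(2) r unfolding c_def by (auto simp: algebra_simps)
    have fin: "\<forall>t\<in>{1-r..1+r}. f t = ereal (g t)" using fg r by auto
    show ?thesis
    proof (cases "s1 \<le> s2")
      case True
      define A where "A = (\<lambda>t. ereal (max (c + s1 * (t - 1)) (c + s2 * (t - 1))))"
      have "(A, (\<lambda>_. 0)) \<in> frac_carrier (PL_convex_fun H)"
        unfolding frac_carrier_def A_def using kink_conv[OF s1(1) s2(1) True] zero_conv[OF H0]
          real_not_zero[of "\<lambda>_. 0"] by (auto simp: zero_ereal_def)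
      moreover have "germ_eq (\<lambda>t. fst (A, (\<lambda>_. 0::ereal)) t - snd (A, (\<lambda>_. 0::ereal)) t) f"
        unfolding germ_eq_def
      proof (intro ev_int[OF r(1)] ballI)
        fix t assume t: "t \<in> {1-r..1+r}"
        show "fst (A, (\<lambda>_. 0::ereal)) t - snd (A, (\<lambda>_. 0::ereal)) t = f t"
        proof (cases "t \<le> 1")
          case True
          have "A t = ereal (c + s1 * (t - 1))" unfolding A_def using kink_le[OF \<open>s1 \<le> s2\<close> True, of c] by (simp only:)
          then show ?thesis using t fin L True by auto
        next
          case False
          have "A t = ereal (c + s2 * (t - 1))" unfolding A_def using kink_ge[OF \<open>s1 \<le> s2\<close>, of t c] False by (simp only: not_le less_imp_le)
          then show ?thesis using t fin R False by auto
        qed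
      qed
      ultimately show ?thesis by blast
    next
      case False
      define k where "k = s1 - s2"
      have "s1 + - s2 \<in> H" using H s1 s2 unfolding add_subgroup_def by blast
      then have k: "k \<in> H" "0 \<le> k" using False unfolding k_def by auto
      define A where "A = (\<lambda>t. ereal (c + s1 * (t - 1)))"
      define B where "B = (\<lambda>t. ereal (max (0 + 0 * (t - 1)) (0 + k * (t - 1))))"
      have "PL_convex_fun H B" unfolding B_def by (rule kink_conv[OF H0 k(1) k(2)])
      moreover have "\<not> germ_eq B germ_zero" unfolding B_def by (rule real_not_zero)
      moreover have "PL_convex_fun H A" unfolding A_def by (rule aff_conv[OF s1(1)])
      ultimately have "(A, B) \<in> frac_carrier (PL_convex_fun H)"
        unfolding frac_carrier_def by simp
      moreover have "germ_eq (\<lambda>t. fst (A, B) t - snd (A, B) t) f"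
        unfolding germ_eq_def
      proof (intro ev_int[OF r(1)] ballI)
        fix t assume t: "t \<in> {1-r..1+r}"
        show "fst (A, B) t - snd (A, B) t = f t"
        proof (cases "t \<le> 1")
          case True
          have "B t = ereal (0 + 0 * (t - 1))" unfolding B_def using kink_le[OF k(2) True, of 0] by (simp only:)
          then show ?thesis using t fin L True unfolding A_def by auto
        next
          case False
          then have "g t = c + s1 * (t - 1) - k * (t - 1)" using t R unfolding k_def by (auto simp: algebra_simps)
          moreover have "B t = ereal (0 + k * (t - 1))" unfolding B_def using kink_ge[OF k(2), of t 0] False by (simp only: not_le less_imp_le)
          ultimately show ?thesis using t fin False unfolding A_def by auto
        qed
      qed
      ultimately show ?thesis by blast
    qed
  qed
qed

lemma carrier_D:
  assumes "p \<in> frac_carrier A"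
  shows "A (fst p)" "A (snd p)" "\<not> germ_eq (snd p) germ_zero"
  using assms unfolding frac_carrier_def by auto

theorem proposition4p5:
  fixes H :: "real set"
  assumes "rank_one_subgroup H"
  shows "mult_cancellative (PL_convex_fun H) \<and>
         (\<exists>\<phi>. frac_iso (PL_convex_fun H) (PL_fun H) \<phi>)"
proof
  have H: "add_subgroup H" using assms unfolding rank_one_subgroup_def by blast
  show "mult_cancellative (PL_convex_fun H)"
    unfolding mult_cancellative_def
  proof (intro allI impI)
    fix f g h assume h: "PL_convex_fun H h" "\<not> germ_eq h germ_zero"
      and eq: "germ_eq (germ_mult f h) (germ_mult g h)"
    have "eventually (\<lambda>t. h t \<noteq> \<infinity> \<and> h t \<noteq> -\<infinity>) (nhds 1)" by (rule conv_fin_ev[OF h])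
    moreover have "eventually (\<lambda>t. f t + h t = g t + h t) (nhds 1)"
      using eq unfolding germ_eq_def germ_mult_def .
    ultimately have "eventually (\<lambda>t. f t = g t) (nhds 1)"
      by eventually_elim (auto intro: e4)
    then show "germ_eq f g" unfolding germ_eq_def .
  qed
  let ?\<phi> = "\<lambda>p t. fst p t - snd p t"
  have "frac_iso (PL_convex_fun H) (PL_fun H) ?\<phi>"
    unfolding frac_iso_def
  proof (intro conjI ballI allI impI)
    fix p assume p: "p \<in> frac_carrier (PL_convex_fun H)"
    show "PL_fun H (?\<phi> p)" using phi_PL[OF H carrier_D[OF p]] .
  next
    fix p q assume p: "p \<in> frac_carrier (PL_convex_fun H)" and q: "q \<in> frac_carrier (PL_convex_fun H)"
    have b: "eventually (\<lambda>t. snd p t \<noteq> \<infinity> \<and> snd p t \<noteq> -\<infinity>) (nhds 1)"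
      using conv_fin_ev carrier_D[OF p] by blast
    have d: "eventually (\<lambda>t. snd q t \<noteq> \<infinity> \<and> snd q t \<noteq> -\<infinity>) (nhds 1)"
      using conv_fin_ev carrier_D[OF q] by blast
    have a: "eventually (\<lambda>t. fst p t \<noteq> \<infinity>) (nhds 1)" using conv_notinf carrier_D[OF p] by blast
    have c: "eventually (\<lambda>t. fst q t \<noteq> \<infinity>) (nhds 1)" using conv_notinf carrier_D[OF q] by blast
    have "eventually (\<lambda>t. (?\<phi> p t = ?\<phi> q t) = (fst p t + snd q t = fst q t + snd p t)) (nhds 1)"
      using b d by eventually_elim (simp add: e1)
    then show "germ_eq (?\<phi> p) (?\<phi> q) = frac_eq p q"
      unfolding germ_eq_def frac_eq_def germ_mult_def by (rule eventually_subst)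
    have "eventually (\<lambda>t. ?\<phi> (frac_add p q) t = germ_add (?\<phi> p) (?\<phi> q) t) (nhds 1)"
      using b d unfolding frac_add_def germ_add_def germ_mult_def by eventually_elim (auto intro: e2)
    then show "germ_eq (?\<phi> (frac_add p q)) (germ_add (?\<phi> p) (?\<phi> q))" unfolding germ_eq_def .
    have "eventually (\<lambda>t. ?\<phi> (frac_mult p q) t = germ_mult (?\<phi> p) (?\<phi> q) t) (nhds 1)"
      using a b c d unfolding frac_mult_def germ_mult_def by eventually_elim (auto intro: e3)
    then show "germ_eq (?\<phi> (frac_mult p q)) (germ_mult (?\<phi> p) (?\<phi> q))" unfolding germ_eq_def .
  next
    fix f assume "PL_fun H f"
    then show "\<exists>p\<in>frac_carrier (PL_convex_fun H). germ_eq (?\<phi> p) f" by (rule surj_part[OF H])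
  qed
  then show "\<exists>\<phi>. frac_iso (PL_convex_fun H) (PL_fun H) \<phi>" by blast
qed

end
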